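(* Suppose that $\mathcal R$ is strictly monotone, i.e., for $Z,Z'\in L_p(\Omega,\mathcal F,P)$ with $Z'\succ Z$ one has $\mathcal R(Z')>\mathcal R(Z)$. Then for every $A\in\mathcal F$ with $P(A)>0$ there exists $\varepsilon>0$ such that $Q(A)\ge\varepsilon$ for every $Q\in\mathfrak M$.
   Context: Let $(\Omega,\mathcal F,P)$ be a probability space, $p\in[1,\infty)$, $1/p+1/q=1$. Let $\mathfrak M$ be a nonempty set of probability measures $Q\ll P$ on $(\Omega,\mathcal F)$ such that the set of densities $\mathfrak A=\{dQ/dP: Q\in\mathfrak M\}\subset L_q(\Omega,\mathcal F,P)$ is convex, bounded in $\|\cdot\|_q$, and closed in the weak$^*$ topology $\sigma(L_q,L_p)$. Define $\mathcal R(Z)=\sup_{Q\in\mathfrak M}\mathbb E_Q[Z]$ for $Z\in L_p(\Omega,\mathcal F,P)$. Notation: $Z'\succ Z$ means $Z'\ge Z$ $P$-a.s. and $P\{Z'>Z\}>0$. *)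

theory Defs
  imports "HOL-Probability.Probability"
begin

text \<open>Setting: P is the probability measure M on (space M, sets M); 1 \<le> p < \<infinity>,
  and q is the conjugate exponent (q = \<infinity> when p = 1, q = p/(p-1) otherwise).\<close>

definition Lp_space :: "'a measure \<Rightarrow> real \<Rightarrow> ('a \<Rightarrow> real) set" where
  "Lp_space M p = {Z. Z \<in> borel_measurable M \<and> integrable M (\<lambda>x. \<bar>Z x\<bar> powr p)}"

definition conj_exp :: "real \<Rightarrow> ereal" where
  "conj_exp p = (if p = 1 then \<infinity> else ereal (p / (p - 1)))"

definition Lq_space :: "'a measure \<Rightarrow> real \<Rightarrow> ('a \<Rightarrow> real) set" where
  "Lq_space M p = {f. f \<in> borel_measurable M \<and>
     (case conj_exp p of
        ereal q \<Rightarrow> integrable M (\<lambda>x. \<bar>f x\<bar> powr q)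
      | _ \<Rightarrow> esssup M (\<lambda>x. ereal \<bar>f x\<bar>) < \<infinity>)}"

definition Lq_norm :: "'a measure \<Rightarrow> real \<Rightarrow> ('a \<Rightarrow> real) \<Rightarrow> real" where
  "Lq_norm M p f =
     (case conj_exp p of
        ereal q \<Rightarrow> (\<integral>x. \<bar>f x\<bar> powr q \<partial>M) powr (1 / q)
      | _ \<Rightarrow> real_of_ereal (esssup M (\<lambda>x. ereal \<bar>f x\<bar>)))"

text \<open>The set of densities dQ/dP, Q in the family, taken with all of their
  (P-a.e. equal) versions, so that properties of the set of equivalence classes
  are expressed on this set of functions.\<close>
definition densities :: "'a measure \<Rightarrow> 'a measure set \<Rightarrow> ('a \<Rightarrow> real) set" where
  "densities M \<MM> = {f. f \<in> borel_measurable M \<and> (AE x in M. f x \<ge> 0) \<and>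
       (\<exists>Q\<in>\<MM>. Q = density M (\<lambda>x. ennreal (f x)))}"

definition convex_fset :: "('a \<Rightarrow> real) set \<Rightarrow> bool" where
  "convex_fset S \<longleftrightarrow> (\<forall>f\<in>S. \<forall>g\<in>S. \<forall>t::real. 0 \<le> t \<and> t \<le> 1 \<longrightarrow>
      (\<lambda>x. t * f x + (1 - t) * g x) \<in> S)"

definition Lq_bounded :: "'a measure \<Rightarrow> real \<Rightarrow> ('a \<Rightarrow> real) set \<Rightarrow> bool" where
  "Lq_bounded M p S \<longleftrightarrow> S \<subseteq> Lq_space M p \<and> (\<exists>C. \<forall>f\<in>S. Lq_norm M p f \<le> C)"

text \<open>Closedness in the weak* topology \<sigma>(L_q, L_p) (on a.e.-equivalence classes):
  every g in L_q lying in the weak* closure of S (every basic weak* neighbourhood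
  of g meets S) is a.e. equal to some element of S.\<close>
definition weak_star_closed :: "'a measure \<Rightarrow> real \<Rightarrow> ('a \<Rightarrow> real) set \<Rightarrow> bool" where
  "weak_star_closed M p S \<longleftrightarrow>
     (\<forall>g\<in>Lq_space M p.
        (\<forall>F e. finite F \<and> F \<subseteq> Lp_space M p \<and> e > 0 \<longrightarrow>
           (\<exists>f\<in>S. \<forall>Z\<in>F. \<bar>(\<integral>x. f x * Z x \<partial>M) - (\<integral>x. g x * Z x \<partial>M)\<bar> < e))
        \<longrightarrow> (\<exists>f\<in>S. AE x in M. f x = g x))"

definition risk :: "'a measure set \<Rightarrow> ('a \<Rightarrow> real) \<Rightarrow> real" where
  "risk \<MM> Z = (SUP Q\<in>\<MM>. \<integral>x. Z x \<partial>Q)"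

definition strictly_monotone :: "'a measure \<Rightarrow> real \<Rightarrow> (('a \<Rightarrow> real) \<Rightarrow> real) \<Rightarrow> bool" where
  "strictly_monotone M p R \<longleftrightarrow>
     (\<forall>Z\<in>Lp_space M p. \<forall>Z'\<in>Lp_space M p.
        (AE x in M. Z' x \<ge> Z x) \<and> measure M {x\<in>space M. Z' x > Z x} > 0 \<longrightarrow> R Z' > R Z)"

end

theory Submission
  imports Defs
begin

theorem proposition3p8:
  fixes M :: "'a measure" and p :: real and \<MM> :: "'a measure set"
  assumes "prob_space M"
    and "1 \<le> p"
    and "\<MM> \<noteq> {}"
    and "\<forall>Q\<in>\<MM>. prob_space Q \<and> sets Q = sets M \<and> absolutely_continuous M Q"
    and "convex_fset (densities M \<MM>)"
    and "Lq_bounded M p (densities M \<MM>)"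
    and "weak_star_closed M p (densities M \<MM>)"
    and "strictly_monotone M p (risk \<MM>)"
  shows "\<forall>A\<in>sets M. measure M A > 0 \<longrightarrow> (\<exists>\<epsilon>>0. \<forall>Q\<in>\<MM>. measure Q A \<ge> \<epsilon>)"
proof (intro ballI impI, rule ccontr)
  fix A assume A: "A \<in> sets M" and pos: "measure M A > 0"
    and no: "\<not> (\<exists>\<epsilon>>0. \<forall>Q\<in>\<MM>. measure Q A \<ge> \<epsilon>)"
  interpret prob_space M by fact
  define Z where "Z = (\<lambda>x. - indicator A x :: real)"
  define Z' where "Z' = (\<lambda>x::'a. 0::real)"
  have ZL: "Z \<in> Lp_space M p"
  proof -
    have e: "(\<lambda>x. \<bar>Z x\<bar> powr p) = indicator A"
      using assms(2) by (auto simp: Z_def indicator_def)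
    have "emeasure M A < \<top>" using emeasure_finite[of A] by (metis less_top)
    hence "integrable M (indicator A :: 'a \<Rightarrow> real)" using A sets.Int_space_eq2[OF A] by (subst integrable_indicator_iff) simp
    moreover have "Z \<in> borel_measurable M" using A by (simp add: Z_def)
    ultimately show ?thesis unfolding Lp_space_def using e by simp
  qed
  have Z'L: "Z' \<in> Lp_space M p" unfolding Lp_space_def Z'_def by simp
  have intQ: "(\<integral>x. Z x \<partial>Q) = - measure Q A" if "Q \<in> \<MM>" for Q
  proof -
    interpret Q: prob_space Q using assms(4) that by auto
    have "A \<in> sets Q" using assms(4) that A by auto
    then show ?thesis unfolding Z_def by simp
  qed
  have bdd: "bdd_above ((\<lambda>Q. \<integral>x. Z x \<partial>Q) ` \<MM>)"
    by (rule bdd_aboveI[of _ 0]) (auto simp: intQ)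
  have R0: "risk \<MM> Z' = 0" unfolding risk_def Z'_def using assms(3) by simp
  have ge: "risk \<MM> Z \<ge> 0"
  proof (rule ccontr)
    assume "\<not> risk \<MM> Z \<ge> 0"
    hence neg: "risk \<MM> Z < 0" by simp
    have "\<forall>Q\<in>\<MM>. measure Q A \<ge> - risk \<MM> Z"
    proof
      fix Q assume Q: "Q \<in> \<MM>"
      have "(\<integral>x. Z x \<partial>Q) \<le> risk \<MM> Z"
        unfolding risk_def by (rule cSUP_upper[OF Q bdd])
      thus "measure Q A \<ge> - risk \<MM> Z" using intQ[OF Q] by simp
    qed
    moreover have "- risk \<MM> Z > 0" using neg by simp
    ultimately show False using no by blast
  qed
  have C: "(AE x in M. Z' x \<ge> Z x) \<and> measure M {x\<in>space M. Z' x > Z x} > 0"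
  proof
    show "AE x in M. Z' x \<ge> Z x" by (auto simp: Z_def Z'_def indicator_def)
    have "{x\<in>space M. Z' x > Z x} = A" using sets.sets_into_space[OF A]
      by (auto simp: Z_def Z'_def indicator_def)
    thus "measure M {x\<in>space M. Z' x > Z x} > 0" using pos by simp
  qed
  have "risk \<MM> Z < risk \<MM> Z'"
    using assms(8) ZL Z'L C unfolding strictly_monotone_def by blast
  then show False using R0 ge by simp
qed

end
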